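(* Let $MSS_{18}=\{p_0,\dots,p_9\}\subset\mathbb{Z}^3$ with $p_0=(0,0,0)$, $p_1=(1,1,0)$, $p_2=(1,2,0)$, $p_3=(0,3,0)$, $p_4=(-1,2,0)$, $p_5=(-1,1,0)$, $p_6=(0,1,-1)$, $p_7=(0,2,-1)$, $p_8=(0,2,1)$, $p_9=(0,1,1)$, and let $x\in MSS_{18}$. Then the digital fundamental groups $\Pi_1^{18}(MSS_{18},x)$ and $\Pi_1^{26}(MSS_{18},x)$ are trivial.
   Context: Adjacencies in $\mathbb{Z}^3$: distinct $x,y\in\mathbb{Z}^3$ are $c_u$-adjacent if at most $u$ coordinates differ by exactly $1$ and all other coordinates are equal; $c_2$-adjacency is called 18-adjacency and $c_3$-adjacency 26-adjacency. For $m\ge 0$, $[0,m]_{\mathbb{Z}}=\{0,\dots,m\}$ with 2-adjacency (consecutive integers adjacent). A map $f:(X,\kappa)\to(Y,\lambda)$ is continuous iff $\kappa$-adjacent points map to equal or $\lambda$-adjacent points. For a digital image $(X,\kappa)$ and $x\in X$, a $\kappa$-loop based at $x$ is a continuous $f:[0,m]_{\mathbb{Z}}\to X$ with $f(0)=f(m)=x$. A trivial extension of $f$ is a loop $f':[0,m']_{\mathbb{Z}}\to X$ that visits the same sequence of points as $f$ in the same order, possibly pausing (remaining constant) for additional time steps at some points. Two loops $f,g$ based at $x$ with the same domain $[0,m]_{\mathbb{Z}}$ are homotopic relative to the endpoints if there is a function $F:[0,m]_{\mathbb{Z}}\times[0,k]_{\mathbb{Z}}\to X$ with $F(\cdot,0)=f$,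 $F(\cdot,k)=g$, each $F(\cdot,t)$ a $\kappa$-loop based at $x$ (so $F(0,t)=F(m,t)=x$), and each $t\mapsto F(s,t)$ continuous. Loops $f,g$ based at $x$ are equivalent if they have trivial extensions with a common domain that are homotopic relative to the endpoints. The digital fundamental group $\Pi_1^{\kappa}(X,x)$ is the set of equivalence classes of $\kappa$-loops based at $x$, with the group operation induced by concatenation of loops; it is trivial if every $\kappa$-loop based at $x$ is equivalent to the constant loop at $x$. *)

theory Defs
  imports Main
begin

type_synonym pt3 = "int \<times> int \<times> int"

definition cadj :: "nat \<Rightarrow> pt3 \<Rightarrow> pt3 \<Rightarrow> bool" where
  "cadj u p q \<longleftrightarrow>
     (let (a, b, c) = p; (a', b', c') = q in
       p \<noteq> q \<and> \<bar>a - a'\<bar> \<le> 1 \<and> \<bar>b - b'\<bar> \<le> 1 \<and> \<bar>c - c'\<bar> \<le> 1 \<and>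
       (if a \<noteq> a' then 1 else 0) + (if b \<noteq> b' then 1 else 0) + (if c \<noteq> c' then 1 else 0) \<le> (u::nat))"

abbreviation adj18 :: "pt3 \<Rightarrow> pt3 \<Rightarrow> bool" where "adj18 \<equiv> cadj 2"
abbreviation adj26 :: "pt3 \<Rightarrow> pt3 \<Rightarrow> bool" where "adj26 \<equiv> cadj 3"

text \<open>A continuous map from the digital interval [0,m] (2-adjacency) into (X,kappa);
  maps are represented as functions on nat, only the values on {0..m} matter.\<close>
definition dpath :: "'a set \<Rightarrow> ('a \<Rightarrow> 'a \<Rightarrow> bool) \<Rightarrow> nat \<Rightarrow> (nat \<Rightarrow> 'a) \<Rightarrow> bool" where
  "dpath X \<kappa> m f \<longleftrightarrow> (\<forall>i\<le>m. f i \<in> X) \<and> (\<forall>i<m. f i = f (Suc i) \<or> \<kappa> (f i) (f (Suc i)))"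

definition dloop :: "'a set \<Rightarrow> ('a \<Rightarrow> 'a \<Rightarrow> bool) \<Rightarrow> 'a \<Rightarrow> nat \<Rightarrow> (nat \<Rightarrow> 'a) \<Rightarrow> bool" where
  "dloop X \<kappa> x m f \<longleftrightarrow> dpath X \<kappa> m f \<and> f 0 = x \<and> f m = x"

text \<open>f' on [0,m'] is a trivial extension of f on [0,m]: it visits the same sequence of points
  in the same order, possibly pausing; i.e. f' = f o h on [0,m'] for a reparametrization h
  with h 0 = 0, h m' = m, and each step of h either stays or advances by one.\<close>
definition trivial_ext :: "nat \<Rightarrow> (nat \<Rightarrow> 'a) \<Rightarrow> nat \<Rightarrow> (nat \<Rightarrow> 'a) \<Rightarrow> bool" where
  "trivial_ext m f m' f' \<longleftrightarrow>
     (\<exists>h :: nat \<Rightarrow> nat. h 0 = 0 \<and> h m' = m \<and>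
        (\<forall>i<m'. h (Suc i) = h i \<or> h (Suc i) = Suc (h i)) \<and>
        (\<forall>i\<le>m'. f' i = f (h i)))"

definition homotopic_rel_end ::
  "'a set \<Rightarrow> ('a \<Rightarrow> 'a \<Rightarrow> bool) \<Rightarrow> 'a \<Rightarrow> nat \<Rightarrow> (nat \<Rightarrow> 'a) \<Rightarrow> (nat \<Rightarrow> 'a) \<Rightarrow> bool" where
  "homotopic_rel_end X \<kappa> x m f g \<longleftrightarrow>
     (\<exists>(F :: nat \<Rightarrow> nat \<Rightarrow> 'a) k.
        (\<forall>s\<le>m. F s 0 = f s) \<and> (\<forall>s\<le>m. F s k = g s) \<and>
        (\<forall>t\<le>k. dloop X \<kappa> x m (\<lambda>s. F s t)) \<and>
        (\<forall>s\<le>m. dpath X \<kappa> k (\<lambda>t. F s t)))"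

definition loop_equiv ::
  "'a set \<Rightarrow> ('a \<Rightarrow> 'a \<Rightarrow> bool) \<Rightarrow> 'a \<Rightarrow> nat \<Rightarrow> (nat \<Rightarrow> 'a) \<Rightarrow> nat \<Rightarrow> (nat \<Rightarrow> 'a) \<Rightarrow> bool" where
  "loop_equiv X \<kappa> x m f n g \<longleftrightarrow>
     (\<exists>M f' g'. trivial_ext m f M f' \<and> trivial_ext n g M g' \<and>
        homotopic_rel_end X \<kappa> x M f' g')"

definition trivial_fundamental_group :: "'a set \<Rightarrow> ('a \<Rightarrow> 'a \<Rightarrow> bool) \<Rightarrow> 'a \<Rightarrow> bool" where
  "trivial_fundamental_group X \<kappa> x \<longleftrightarrow>
     (\<forall>m f. dloop X \<kappa> x m f \<longrightarrow> loop_equiv X \<kappa> x m f 0 (\<lambda>_. x))"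

definition MSS18 :: "pt3 set" where
  "MSS18 = {(0,0,0), (1,1,0), (1,2,0), (0,3,0), (-1,2,0), (-1,1,0),
            (0,1,-1), (0,2,-1), (0,2,1), (0,1,1)}"

end

theory Submission
  imports Defs
begin


definition contr :: "'a set \<Rightarrow> ('a \<Rightarrow> 'a \<Rightarrow> bool) \<Rightarrow> 'a \<Rightarrow> bool" where
"contr X \<kappa> x \<longleftrightarrow> (\<exists>(R::nat \<Rightarrow> 'a \<Rightarrow> 'a) k. (\<forall>p\<in>X. R 0 p = p) \<and> (\<forall>p\<in>X. R k p = x) \<and> (\<forall>t\<le>k. R t x = x)
   \<and> (\<forall>t\<le>k. \<forall>p\<in>X. R t p \<in> X)
   \<and> (\<forall>t\<le>k. \<forall>p\<in>X. \<forall>q\<in>X. \<kappa> p q \<longrightarrow> R t p = R t q \<or> \<kappa> (R t p) (R t q))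
   \<and> (\<forall>t<k. \<forall>p\<in>X. R t p = R (Suc t) p \<or> \<kappa> (R t p) (R (Suc t) p)))"

lemma remove_point:
  assumes px: "p \<noteq> x"
  and pair: "\<forall>a\<in>X. \<forall>c\<in>X. \<kappa> a p \<longrightarrow> \<kappa> p c \<longrightarrow> (\<exists>y\<in>X. y \<noteq> p \<and> \<kappa> p y \<and> (a = y \<or> \<kappa> a y) \<and> (y = c \<or> \<kappa> y c))"
  and C: "contr (X - {p}) \<kappa> x"
  shows "trivial_fundamental_group X \<kappa> x"
  unfolding trivial_fundamental_group_def
proof (intro allI impI)
  fix m f assume L: "dloop X \<kappa> x m f"
  hence fX: "\<forall>i\<le>m. f i \<in> X" and fst: "\<forall>i<m. f i = f (Suc i) \<or> \<kappa> (f i) (f (Suc i))"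
    and f0: "f 0 = x" and fm: "f m = x" by (auto simp: dloop_def dpath_def)
  from C obtain R k where R0: "\<forall>q\<in>X-{p}. R 0 q = q" and Rk: "\<forall>q\<in>X-{p}. R k q = x"
    and Rx: "\<forall>t\<le>k. R t x = x" and RX: "\<forall>t\<le>k. \<forall>q\<in>X-{p}. R t q \<in> X-{p}"
    and Rc: "\<forall>t\<le>k. \<forall>a\<in>X-{p}. \<forall>b\<in>X-{p}. \<kappa> a b \<longrightarrow> R t a = R t b \<or> \<kappa> (R t a) (R t b)"
    and Rs: "\<forall>t<k. \<forall>q\<in>X-{p}. R t q = R (Suc t) q \<or> \<kappa> (R t q) (R (Suc t) q)"
    unfolding contr_def by (elim exE conjE) (intro that, assumption+)
  define lo where "lo s = (GREATEST j. j < s \<and> f j \<noteq> p)" for s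
  define hi where "hi s = (LEAST j. s < j \<and> f j \<noteq> p)" for s
  define Y where "Y a c = (SOME y. y\<in>X \<and> y \<noteq> p \<and> \<kappa> p y \<and> (a = y \<or> \<kappa> a y) \<and> (y = c \<or> \<kappa> y c))" for a c
  define g where "g s = (if f s = p then Y (f (lo s)) (f (hi s)) else f s)" for s
  have lo: "lo s < s \<and> f (lo s) \<noteq> p \<and> (\<forall>j. lo s < j \<and> j \<le> s \<longrightarrow> f j = p)" if "f s = p" for s
  proof -
    have s0: "0 < s" using that f0 px by (cases s) auto
    have ex: "lo s < s \<and> f (lo s) \<noteq> p" unfolding lo_def
      by (rule GreatestI_nat[of _ 0 s]) (use s0 f0 px in auto)
    have le: "j \<le> lo s" if "j < s" "f j \<noteq> p" for j unfolding lo_def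
      by (rule Greatest_le_nat[of _ j s]) (use that in auto)
    have "f j = p" if "lo s < j" "j \<le> s" for j
    proof (cases "j = s")
      case True thus ?thesis using \<open>f s = p\<close> by simp
    next
      case False thus ?thesis using that le[of j] by force
    qed
    thus ?thesis using ex by blast
  qed
  have hi: "s < hi s \<and> hi s \<le> m \<and> f (hi s) \<noteq> p \<and> (\<forall>j. s \<le> j \<and> j < hi s \<longrightarrow> f j = p)"
    if "f s = p" "s \<le> m" for s
  proof -
    have sm: "s < m" using that fm px by (cases "s = m") auto
    have ex: "s < hi s \<and> f (hi s) \<noteq> p" unfolding hi_def
      by (rule LeastI[of _ m]) (use sm fm px in auto)
    have le: "hi s \<le> j" if "s < j" "f j \<noteq> p" for j unfolding hi_def
      by (rule Least_le) (use that in auto)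
    have "hi s \<le> m" using le[of m] sm fm px by auto
    moreover have "f j = p" if "s \<le> j" "j < hi s" for j
    proof (cases "j = s")
      case True thus ?thesis using \<open>f s = p\<close> by simp
    next
      case False thus ?thesis using that le[of j] by force
    qed
    ultimately show ?thesis using ex by blast
  qed
  have lo_eq: "lo s = j" if "j < s" "f j \<noteq> p" "\<forall>i. j < i \<and> i \<le> s \<longrightarrow> f i = p" for s j
    unfolding lo_def
  proof (rule Greatest_equality)
    show "j < s \<and> f j \<noteq> p" using that by simp
    fix y assume "y < s \<and> f y \<noteq> p" thus "y \<le> j" using that(3) by (meson less_imp_le not_le)
  qed
  have hi_eq: "hi s = j" if "s < j" "f j \<noteq> p" "\<forall>i. s \<le> i \<and> i < j \<longrightarrow> f i = p" for s j
    unfolding hi_def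
  proof (rule Least_equality)
    show "s < j \<and> f j \<noteq> p" using that by simp
    fix y assume "s < y \<and> f y \<noteq> p" thus "j \<le> y" using that(3) by (meson less_imp_le not_le)
  qed
  have Yp: "Y a c \<in> X \<and> Y a c \<noteq> p \<and> \<kappa> p (Y a c) \<and> (a = Y a c \<or> \<kappa> a (Y a c)) \<and> (Y a c = c \<or> \<kappa> (Y a c) c)"
    if "a\<in>X" "c\<in>X" "\<kappa> a p" "\<kappa> p c" for a c
  proof -
    from pair that obtain y where "y\<in>X \<and> y \<noteq> p \<and> \<kappa> p y \<and> (a = y \<or> \<kappa> a y) \<and> (y = c \<or> \<kappa> y c)" by blast
    thus ?thesis unfolding Y_def by (rule someI)
  qed
  have gP: "g s \<in> X \<and> g s \<noteq> p \<and> \<kappa> p (g s) \<and> (f (lo s) = g s \<or> \<kappa> (f (lo s)) (g s)) \<and> (g s = f (hi s) \<or> \<kappa> (g s) (f (hi s)))"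
    if "f s = p" "s \<le> m" for s
  proof -
    from lo[OF that(1)] have l1: "lo s < s" and l2: "f (lo s) \<noteq> p" and l3: "\<forall>j. lo s < j \<and> j \<le> s \<longrightarrow> f j = p" by blast+
    from hi[OF that] have h1: "s < hi s" and h2: "hi s \<le> m" and h3: "f (hi s) \<noteq> p" and h4: "\<forall>j. s \<le> j \<and> j < hi s \<longrightarrow> f j = p" by blast+
    have lm: "lo s \<le> m" using l1 that(2) by linarith
    have a: "f (lo s) \<in> X" using lm fX by blast
    have c: "f (hi s) \<in> X" using h2 fX by blast
    have "f (Suc (lo s)) = p" using l3 l1 by (simp add: Suc_leI)
    moreover have "lo s < m" using l1 that(2) by linarith
    ultimately have ka: "\<kappa> (f (lo s)) p" using fst l2 by force
    obtain j where j: "hi s = Suc j" using h1 by (cases "hi s") auto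
    have "f j = p" using h4 h1 j by (metis less_Suc_eq_le less_Suc_eq lessI)
    moreover have "j < m" using h2 j by linarith
    ultimately have kc: "\<kappa> p (f (hi s))" using fst h3 j by force
    show ?thesis using Yp[OF a c ka kc] that unfolding g_def by simp
  qed
  have gX: "g s \<in> X - {p} \<and> (f s = g s \<or> \<kappa> (f s) (g s))" if "s \<le> m" for s
    using gP[OF _ that] fX that by (cases "f s = p") (auto simp: g_def)
  have g0: "g 0 = x" and gm: "g m = x" using f0 fm px by (auto simp: g_def)
  have grow: "g i = g (Suc i) \<or> \<kappa> (g i) (g (Suc i))" if "i < m" for i
  proof (cases "f i = p")
    case False
    show ?thesis
    proof (cases "f (Suc i) = p")
      case False2: False
      thus ?thesis using False fst that by (simp add: g_def)
    next
      case True
      have "lo (Suc i) = i" by (rule lo_eq) (use False True in \<open>auto simp: le_Suc_eq\<close>)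
      thus ?thesis using gP[OF True] that False unfolding g_def by (auto simp: g_def)
    qed
  next
    case True
    show ?thesis
    proof (cases "f (Suc i) = p")
      case False
      have "hi i = Suc i" by (rule hi_eq) (use False True in \<open>auto simp: less_Suc_eq\<close>)
      thus ?thesis using gP[OF True] that False True by (auto simp: g_def)
    next
      case T2: True
      have l1: "lo (Suc i) = lo i" using lo[OF True] T2 by (intro lo_eq) (auto simp: le_Suc_eq)
      from hi[OF T2] that have H1: "Suc i < hi (Suc i)" and H2: "f (hi (Suc i)) \<noteq> p"
        and H3: "\<forall>j. Suc i \<le> j \<and> j < hi (Suc i) \<longrightarrow> f j = p" by auto
      have H4: "\<forall>j. i \<le> j \<and> j < hi (Suc i) \<longrightarrow> f j = p"
      proof (intro allI impI)
        fix j assume A: "i \<le> j \<and> j < hi (Suc i)"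
        show "f j = p"
        proof (cases "j = i")
          case True thus ?thesis using \<open>f i = p\<close> by simp
        next
          case False hence "Suc i \<le> j" using A by linarith
          thus ?thesis using H3 A by blast
        qed
      qed
      have h1: "hi i = hi (Suc i)" by (rule hi_eq) (use H1 H2 H4 in auto)
      show ?thesis using l1 h1 True T2 by (simp add: g_def)
    qed
  qed
  show "loop_equiv X \<kappa> x m f 0 (\<lambda>_. x)"
    unfolding loop_equiv_def
  proof (intro exI conjI)
    show "trivial_ext m f m f" unfolding trivial_ext_def by (rule exI[of _ "\<lambda>s. s"]) auto
    show "trivial_ext 0 (\<lambda>_. x) m (\<lambda>_. x)" unfolding trivial_ext_def by (rule exI[of _ "\<lambda>s. 0"]) auto
    define F where "F s t = (if t = 0 then f s else R (t - 1) (g s))" for s t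
    show "homotopic_rel_end X \<kappa> x m f (\<lambda>_. x)"
      unfolding homotopic_rel_end_def
    proof (intro exI[of _ F] exI[of _ "Suc k"] conjI allI impI)
      fix s assume "s \<le> m"
      show "F s 0 = f s" by (simp add: F_def)
      show "F s (Suc k) = x" using gX[OF \<open>s \<le> m\<close>] Rk by (simp add: F_def)
      show "dpath X \<kappa> (Suc k) (\<lambda>t. F s t)" unfolding dpath_def
      proof (intro conjI allI impI)
        fix t assume "t \<le> Suc k"
        thus "F s t \<in> X" using gX[OF \<open>s \<le> m\<close>] RX fX \<open>s \<le> m\<close> by (cases t) (auto simp: F_def)
      next
        fix t assume "t < Suc k"
        show "F s t = F s (Suc t) \<or> \<kappa> (F s t) (F s (Suc t))"
        proof (cases t)
          case 0 thus ?thesis using gX[OF \<open>s \<le> m\<close>] R0 by (simp add: F_def)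
        next
          case (Suc t') thus ?thesis using gX[OF \<open>s \<le> m\<close>] Rs \<open>t < Suc k\<close> by (simp add: F_def)
        qed
      qed
    next
      fix t assume "t \<le> Suc k"
      show "dloop X \<kappa> x m (\<lambda>s. F s t)"
      proof (cases t)
        case 0 thus ?thesis using L by (simp add: F_def)
      next
        case (Suc t')
        hence t': "t' \<le> k" using \<open>t \<le> Suc k\<close> by simp
        have "R t' (g i) = R t' (g (Suc i)) \<or> \<kappa> (R t' (g i)) (R t' (g (Suc i)))" if "i < m" for i
          using grow[OF that] gX[of i] gX[of "Suc i"] that Rc t' by force
        moreover have "R t' (g i) \<in> X" if "i \<le> m" for i using gX[OF that] RX t' by blast
        ultimately show ?thesis using Suc g0 gm Rx t' by (simp add: F_def dloop_def dpath_def)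
      qed
    qed
  qed
qed

definition am :: "('a \<times> 'a) list \<Rightarrow> 'a \<Rightarrow> 'a" where
  "am al p = (case map_of al p of Some v \<Rightarrow> v | None \<Rightarrow> p)"

definition mapok :: "('a \<Rightarrow> 'a \<Rightarrow> bool) \<Rightarrow> 'a set \<Rightarrow> 'a \<Rightarrow> ('a \<Rightarrow> 'a) \<Rightarrow> bool" where
  "mapok \<kappa> S x g \<longleftrightarrow> g x = x \<and> (\<forall>p\<in>S. g p \<in> S) \<and> (\<forall>p\<in>S. g p = p \<or> \<kappa> p (g p)) \<and>
     (\<forall>p\<in>S. \<forall>q\<in>S. \<kappa> p q \<longrightarrow> g p = g q \<or> \<kappa> (g p) (g q))"

lemma contr_single: "contr {x} \<kappa> x"
  unfolding contr_def by (rule exI[of _ "\<lambda>t p. p"], rule exI[of _ 0]) auto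

lemma contr_step:
  assumes M: "mapok \<kappa> S x g" and C: "contr (g ` S) \<kappa> x"
  shows "contr S \<kappa> x"
proof -
  from M have gx: "g x = x" and gS: "\<forall>p\<in>S. g p \<in> S" and gn: "\<forall>p\<in>S. g p = p \<or> \<kappa> p (g p)"
    and gc: "\<forall>p\<in>S. \<forall>q\<in>S. \<kappa> p q \<longrightarrow> g p = g q \<or> \<kappa> (g p) (g q)" unfolding mapok_def by blast+
  from C obtain R k where R0: "\<forall>q\<in>g`S. R 0 q = q" and Rk: "\<forall>q\<in>g`S. R k q = x"
    and Rx: "\<forall>t\<le>k. R t x = x" and RX: "\<forall>t\<le>k. \<forall>q\<in>g`S. R t q \<in> g`S"
    and Rc: "\<forall>t\<le>k. \<forall>a\<in>g`S. \<forall>b\<in>g`S. \<kappa> a b \<longrightarrow> R t a = R t b \<or> \<kappa> (R t a) (R t b)"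
    and Rs: "\<forall>t<k. \<forall>q\<in>g`S. R t q = R (Suc t) q \<or> \<kappa> (R t q) (R (Suc t) q)"
    unfolding contr_def by (elim exE conjE) (intro that, assumption+)
  define R' where "R' t p = (case t of 0 \<Rightarrow> p | Suc t' \<Rightarrow> R t' (g p))" for t p
  have gi: "g p \<in> g ` S" if "p \<in> S" for p using that by blast
  have gSS: "g ` S \<subseteq> S" using gS by blast
  show ?thesis unfolding contr_def
  proof (intro exI[of _ R'] exI[of _ "Suc k"] conjI ballI allI impI)
    fix p assume p: "p \<in> S"
    show "R' 0 p = p" by (simp add: R'_def)
    show "R' (Suc k) p = x" using Rk p by (simp add: R'_def)
  next
    fix t assume "t \<le> Suc k"
    thus "R' t x = x" using gx Rx by (cases t) (auto simp: R'_def)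
  next
    fix t p assume "t \<le> Suc k" "p \<in> S"
    thus "R' t p \<in> S" using RX gi gSS by (cases t) (auto simp: R'_def)
  next
    fix t p q assume t: "t \<le> Suc k" and p: "p \<in> S" and q: "q \<in> S" and pq: "\<kappa> p q"
    show "R' t p = R' t q \<or> \<kappa> (R' t p) (R' t q)"
    proof (cases t)
      case 0 thus ?thesis using pq by (simp add: R'_def)
    next
      case (Suc t')
      have "g p = g q \<or> \<kappa> (g p) (g q)" using gc p q pq by blast
      moreover have "t' \<le> k" using t Suc by simp
      moreover have "\<kappa> (g p) (g q) \<longrightarrow> R t' (g p) = R t' (g q) \<or> \<kappa> (R t' (g p)) (R t' (g q))"
        using Rc gi[OF p] gi[OF q] \<open>t' \<le> k\<close> by blast
      ultimately show ?thesis using Suc by (auto simp: R'_def)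
    qed
  next
    fix t p assume t: "t < Suc k" and p: "p \<in> S"
    show "R' t p = R' (Suc t) p \<or> \<kappa> (R' t p) (R' (Suc t) p)"
    proof (cases t)
      case 0 thus ?thesis using gn p R0 gi[OF p] by (auto simp: R'_def)
    next
      case (Suc t')
      hence "t' < k" using t by simp
      hence "R t' (g p) = R (Suc t') (g p) \<or> \<kappa> (R t' (g p)) (R (Suc t') (g p))" using Rs gi[OF p] by blast
      thus ?thesis using Suc by (simp add: R'_def)
    qed
  qed
qed

fun dism :: "('a \<Rightarrow> 'a \<Rightarrow> bool) \<Rightarrow> 'a set \<Rightarrow> 'a \<Rightarrow> ('a \<times> 'a) list list \<Rightarrow> bool" where
  "dism \<kappa> S x [] = (S = {x})"
| "dism \<kappa> S x (al # r) = (mapok \<kappa> S x (am al) \<and> dism \<kappa> (am al ` S) x r)"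

lemma dism_contr: "dism \<kappa> S x l \<Longrightarrow> contr S \<kappa> x"
proof (induction l arbitrary: S)
  case Nil thus ?case by (simp add: contr_single)
next
  case (Cons al r) thus ?case using contr_step[of \<kappa> S x "am al"] by auto
qed


lemma c2_0: "trivial_fundamental_group MSS18 (cadj 2) (0,0,0)"
proof (rule remove_point[where p="(0,3,0)"])
  show "contr (MSS18 - {(0,3,0)}) (cadj 2) (0,0,0)"
    by (rule dism_contr[where l="[[((-1,2,0),(-1,1,0)), ((0,1,-1),(-1,1,0)), ((0,1,1),(-1,1,0)), ((0,2,-1),(0,1,-1)), ((0,2,1),(0,1,1)), ((1,1,0),(0,0,0)), ((1,2,0),(1,1,0))], [((-1,1,0),(0,0,0)), ((0,1,-1),(0,0,0)), ((0,1,1),(0,0,0)), ((1,1,0),(0,0,0))]]"]) code_simp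
qed code_simp+

lemma c2_1: "trivial_fundamental_group MSS18 (cadj 2) (1,1,0)"
proof (rule remove_point[where p="(0,0,0)"])
  show "contr (MSS18 - {(0,0,0)}) (cadj 2) (1,1,0)"
    by (rule dism_contr[where l="[[((-1,1,0),(0,1,-1)), ((-1,2,0),(0,2,-1)), ((0,1,1),(1,1,0)), ((0,2,1),(1,2,0)), ((0,3,0),(0,2,-1))], [((0,2,-1),(0,1,-1)), ((1,2,0),(1,1,0))], [((0,1,-1),(1,1,0))]]"]) code_simp
qed code_simp+

lemma c2_2: "trivial_fundamental_group MSS18 (cadj 2) (1,2,0)"
proof (rule remove_point[where p="(0,0,0)"])
  show "contr (MSS18 - {(0,0,0)}) (cadj 2) (1,2,0)"
    by (rule dism_contr[where l="[[((-1,1,0),(-1,2,0)), ((0,1,-1),(0,2,-1)), ((0,1,1),(0,2,1)), ((1,1,0),(1,2,0))], [((-1,2,0),(0,2,-1)), ((0,2,1),(0,3,0)), ((0,3,0),(0,2,-1))], [((0,2,-1),(1,2,0)), ((0,3,0),(1,2,0))]]"]) code_simp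
qed code_simp+

lemma c2_3: "trivial_fundamental_group MSS18 (cadj 2) (0,3,0)"
proof (rule remove_point[where p="(0,0,0)"])
  show "contr (MSS18 - {(0,0,0)}) (cadj 2) (0,3,0)"
    by (rule dism_contr[where l="[[((-1,1,0),(-1,2,0)), ((0,1,-1),(0,2,-1)), ((0,1,1),(0,2,1)), ((0,2,-1),(-1,2,0)), ((0,2,1),(-1,2,0)), ((1,1,0),(1,2,0)), ((1,2,0),(0,2,-1))], [((-1,2,0),(0,3,0)), ((0,2,-1),(0,3,0)), ((0,2,1),(0,3,0)), ((1,2,0),(0,3,0))]]"]) code_simp
qed code_simp+

lemma c2_4: "trivial_fundamental_group MSS18 (cadj 2) (-1,2,0)"
proof (rule remove_point[where p="(0,0,0)"])
  show "contr (MSS18 - {(0,0,0)}) (cadj 2) (-1,2,0)"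
    by (rule dism_contr[where l="[[((0,1,-1),(-1,1,0)), ((0,1,1),(-1,1,0)), ((0,2,-1),(-1,2,0)), ((0,2,1),(-1,2,0)), ((0,3,0),(-1,2,0)), ((1,1,0),(0,1,-1)), ((1,2,0),(0,2,-1))], [((0,1,-1),(-1,1,0)), ((0,2,-1),(-1,2,0))], [((-1,1,0),(-1,2,0))]]"]) code_simp
qed code_simp+

lemma c2_5: "trivial_fundamental_group MSS18 (cadj 2) (-1,1,0)"
proof (rule remove_point[where p="(0,0,0)"])
  show "contr (MSS18 - {(0,0,0)}) (cadj 2) (-1,1,0)"
    by (rule dism_contr[where l="[[((-1,2,0),(-1,1,0)), ((0,1,-1),(-1,1,0)), ((0,1,1),(-1,1,0)), ((0,2,-1),(-1,2,0)), ((0,2,1),(-1,2,0)), ((0,3,0),(-1,2,0)), ((1,1,0),(0,1,-1)), ((1,2,0),(0,2,-1))], [((-1,2,0),(-1,1,0)), ((0,1,-1),(-1,1,0)), ((0,2,-1),(-1,2,0))], [((-1,2,0),(-1,1,0))]]"]) code_simp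
qed code_simp+

lemma c2_6: "trivial_fundamental_group MSS18 (cadj 2) (0,1,-1)"
proof (rule remove_point[where p="(0,0,0)"])
  show "contr (MSS18 - {(0,0,0)}) (cadj 2) (0,1,-1)"
    by (rule dism_contr[where l="[[((0,1,1),(-1,1,0)), ((0,2,1),(-1,2,0)), ((0,3,0),(-1,2,0)), ((1,1,0),(0,1,-1)), ((1,2,0),(0,2,-1))], [((-1,2,0),(-1,1,0)), ((0,2,-1),(0,1,-1))], [((-1,1,0),(0,1,-1))]]"]) code_simp
qed code_simp+

lemma c2_7: "trivial_fundamental_group MSS18 (cadj 2) (0,2,-1)"
proof (rule remove_point[where p="(0,0,0)"])
  show "contr (MSS18 - {(0,0,0)}) (cadj 2) (0,2,-1)"
    by (rule dism_contr[where l="[[((0,1,1),(-1,1,0)), ((0,2,1),(-1,2,0)), ((0,3,0),(-1,2,0)), ((1,1,0),(0,1,-1)), ((1,2,0),(0,2,-1))], [((-1,1,0),(-1,2,0)), ((0,1,-1),(0,2,-1))], [((-1,2,0),(0,2,-1))]]"]) code_simp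
qed code_simp+

lemma c2_8: "trivial_fundamental_group MSS18 (cadj 2) (0,2,1)"
proof (rule remove_point[where p="(0,0,0)"])
  show "contr (MSS18 - {(0,0,0)}) (cadj 2) (0,2,1)"
    by (rule dism_contr[where l="[[((0,1,-1),(-1,1,0)), ((0,2,-1),(-1,2,0)), ((0,3,0),(-1,2,0)), ((1,1,0),(0,1,1)), ((1,2,0),(0,2,1))], [((-1,1,0),(-1,2,0)), ((0,1,1),(0,2,1))], [((-1,2,0),(0,2,1))]]"]) code_simp
qed code_simp+

lemma c2_9: "trivial_fundamental_group MSS18 (cadj 2) (0,1,1)"
proof (rule remove_point[where p="(0,0,0)"])
  show "contr (MSS18 - {(0,0,0)}) (cadj 2) (0,1,1)"
    by (rule dism_contr[where l="[[((0,1,-1),(-1,1,0)), ((0,2,-1),(-1,2,0)), ((0,3,0),(-1,2,0)), ((1,1,0),(0,1,1)), ((1,2,0),(0,2,1))], [((-1,2,0),(-1,1,0)), ((0,2,1),(0,1,1))], [((-1,1,0),(0,1,1))]]"]) code_simp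
qed code_simp+

lemma c3_0: "trivial_fundamental_group MSS18 (cadj 3) (0,0,0)"
proof (rule remove_point[where p="(1,2,0)"])
  show "contr (MSS18 - {(1,2,0)}) (cadj 3) (0,0,0)"
    by (rule dism_contr[where l="[[((0,3,0),(-1,2,0))], [((0,2,1),(0,1,1))], [((-1,2,0),(-1,1,0))], [((0,2,-1),(0,1,-1))], [((1,1,0),(0,0,0))], [((0,1,-1),(0,0,0))], [((-1,1,0),(0,0,0))], [((0,1,1),(0,0,0))]]"]) code_simp
qed code_simp+

lemma c3_1: "trivial_fundamental_group MSS18 (cadj 3) (1,1,0)"
proof (rule remove_point[where p="(0,0,0)"])
  show "contr (MSS18 - {(0,0,0)}) (cadj 3) (1,1,0)"
    by (rule dism_contr[where l="[[((-1,1,0),(-1,2,0))], [((0,1,-1),(0,2,-1))], [((0,1,1),(0,2,1))], [((-1,2,0),(0,3,0))], [((0,2,1),(1,2,0))], [((0,3,0),(0,2,-1))], [((0,2,-1),(1,1,0))], [((1,2,0),(1,1,0))]]"]) code_simp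
qed code_simp+

lemma c3_2: "trivial_fundamental_group MSS18 (cadj 3) (1,2,0)"
proof (rule remove_point[where p="(0,0,0)"])
  show "contr (MSS18 - {(0,0,0)}) (cadj 3) (1,2,0)"
    by (rule dism_contr[where l="[[((1,1,0),(1,2,0))], [((-1,1,0),(-1,2,0))], [((0,1,-1),(0,2,-1))], [((0,2,-1),(0,3,0))], [((0,3,0),(0,2,1))], [((0,2,1),(0,1,1))], [((-1,2,0),(0,1,1))], [((0,1,1),(1,2,0))]]"]) code_simp
qed code_simp+

lemma c3_3: "trivial_fundamental_group MSS18 (cadj 3) (0,3,0)"
proof (rule remove_point[where p="(0,0,0)"])
  show "contr (MSS18 - {(0,0,0)}) (cadj 3) (0,3,0)"
    by (rule dism_contr[where l="[[((1,1,0),(1,2,0))], [((-1,1,0),(-1,2,0))], [((0,1,-1),(0,2,-1))], [((0,2,-1),(0,3,0))], [((1,2,0),(0,2,1))], [((0,2,1),(-1,2,0))], [((0,1,1),(-1,2,0))], [((-1,2,0),(0,3,0))]]"]) code_simp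
qed code_simp+

lemma c3_4: "trivial_fundamental_group MSS18 (cadj 3) (-1,2,0)"
proof (rule remove_point[where p="(0,0,0)"])
  show "contr (MSS18 - {(0,0,0)}) (cadj 3) (-1,2,0)"
    by (rule dism_contr[where l="[[((1,1,0),(1,2,0))], [((-1,1,0),(-1,2,0))], [((0,1,-1),(0,2,-1))], [((0,2,-1),(0,3,0))], [((1,2,0),(0,2,1))], [((0,2,1),(-1,2,0))], [((0,3,0),(-1,2,0))], [((0,1,1),(-1,2,0))]]"]) code_simp
qed code_simp+

lemma c3_5: "trivial_fundamental_group MSS18 (cadj 3) (-1,1,0)"
proof (rule remove_point[where p="(0,0,0)"])
  show "contr (MSS18 - {(0,0,0)}) (cadj 3) (-1,1,0)"
    by (rule dism_contr[where l="[[((1,1,0),(1,2,0))], [((0,1,-1),(0,2,-1))], [((0,1,1),(0,2,1))], [((1,2,0),(0,3,0))], [((0,2,1),(-1,2,0))], [((0,2,-1),(-1,2,0))], [((0,3,0),(-1,2,0))], [((-1,2,0),(-1,1,0))]]"]) code_simp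
qed code_simp+

lemma c3_6: "trivial_fundamental_group MSS18 (cadj 3) (0,1,-1)"
proof (rule remove_point[where p="(0,0,0)"])
  show "contr (MSS18 - {(0,0,0)}) (cadj 3) (0,1,-1)"
    by (rule dism_contr[where l="[[((1,1,0),(1,2,0))], [((-1,1,0),(-1,2,0))], [((0,1,1),(0,2,1))], [((0,2,1),(0,3,0))], [((1,2,0),(0,2,-1))], [((0,3,0),(0,2,-1))], [((0,2,-1),(0,1,-1))], [((-1,2,0),(0,1,-1))]]"]) code_simp
qed code_simp+

lemma c3_7: "trivial_fundamental_group MSS18 (cadj 3) (0,2,-1)"
proof (rule remove_point[where p="(0,0,0)"])
  show "contr (MSS18 - {(0,0,0)}) (cadj 3) (0,2,-1)"
    by (rule dism_contr[where l="[[((1,1,0),(1,2,0))], [((-1,1,0),(-1,2,0))], [((0,1,-1),(0,2,-1))], [((0,1,1),(0,2,1))], [((0,2,1),(0,3,0))], [((0,3,0),(0,2,-1))], [((1,2,0),(0,2,-1))], [((-1,2,0),(0,2,-1))]]"]) code_simp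
qed code_simp+

lemma c3_8: "trivial_fundamental_group MSS18 (cadj 3) (0,2,1)"
proof (rule remove_point[where p="(0,0,0)"])
  show "contr (MSS18 - {(0,0,0)}) (cadj 3) (0,2,1)"
    by (rule dism_contr[where l="[[((1,1,0),(1,2,0))], [((-1,1,0),(-1,2,0))], [((0,1,-1),(0,2,-1))], [((0,2,-1),(0,3,0))], [((1,2,0),(0,2,1))], [((0,3,0),(0,2,1))], [((-1,2,0),(0,2,1))], [((0,1,1),(0,2,1))]]"]) code_simp
qed code_simp+

lemma c3_9: "trivial_fundamental_group MSS18 (cadj 3) (0,1,1)"
proof (rule remove_point[where p="(0,0,0)"])
  show "contr (MSS18 - {(0,0,0)}) (cadj 3) (0,1,1)"
    by (rule dism_contr[where l="[[((1,1,0),(1,2,0))], [((-1,1,0),(-1,2,0))], [((0,1,-1),(0,2,-1))], [((0,2,-1),(0,3,0))], [((1,2,0),(0,2,1))], [((0,2,1),(-1,2,0))], [((0,3,0),(-1,2,0))], [((-1,2,0),(0,1,1))]]"]) code_simp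
qed code_simp+


theorem corollary3p2:
  assumes "x \<in> MSS18"
  shows "trivial_fundamental_group MSS18 adj18 x \<and> trivial_fundamental_group MSS18 adj26 x"
  using assms c2_0 c2_1 c2_2 c2_3 c2_4 c2_5 c2_6 c2_7 c2_8 c2_9
    c3_0 c3_1 c3_2 c3_3 c3_4 c3_5 c3_6 c3_7 c3_8 c3_9
  unfolding MSS18_def by auto

end
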